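(* Let $F_N:\mathbb{R}^n\to\mathbb{R}$ be the function computed by a feedforward ReLU network (as described in the context), let $P=\{\mathbf{x}\in\mathbb{R}^n : A\mathbf{x}\le \mathbf{c}\}$ be a nonempty compact polyhedron, and let $\delta>0$. Suppose the procedures LocalSearch and GlobalSearch satisfy properties (P1) and (P2) described in the context. Then the algorithm FindUpperBound$(F_N,P,\delta)$ described in the context always terminates, and the value $u$ it returns satisfies $$u^*\le u\le u^*+\delta,\qquad\text{where } u^*=\max_{\mathbf{x}\in P}F_N(\mathbf{x}).$$
   Context: Network: integers $n,k,N\ge 1$; matrices $W_0\in\mathbb{R}^{N\times n}$, $W_i\in\mathbb{R}^{N\times N}$ for $1\le i\le k-1$, $W_k\in\mathbb{R}^{1\times N}$ and vectors $\mathbf{b}_0,\dots,\mathbf{b}_{k-1}\in\mathbb{R}^N$, $b_k\in\mathbb{R}$. Let $\sigma(z)=\max(z,0)$, applied componentwise to vectors. For input $\mathbf{x}\in\mathbb{R}^n$ set $\mathbf{z}_0=\mathbf{x}$, $\mathbf{z}_{i+1}=\sigma(W_i\mathbf{z}_i+\mathbf{b}_i)$ for $i=0,\dots,k-1$, and $F_N(\mathbf{x})=W_k\mathbf{z}_k+b_k$. Property (P1): given $\mathbf{x}\in P$, LocalSearch$(\mathbf{x})$ returns a pair $(\mathbf{x}',u')$ with $\mathbf{x}'\in P$, $u'=F_N(\mathbf{x}')$ and $F_N(\mathbf{x}')\ge F_N(\mathbf{x})$. Property (P2): given a real number $u$, GlobalSearch$(u)$ either declares "feasible" and returns $(\mathbf{x}',u')$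 with $\mathbf{x}'\in P$, $u'=F_N(\mathbf{x}')\ge u$, or declares "not feasible", which it does only if no $\mathbf{x}'\in P$ satisfies $F_N(\mathbf{x}')\ge u$. Algorithm FindUpperBound$(F_N,P,\delta)$: pick any $\mathbf{x}\in P$. Repeat: (1) $(\mathbf{x},u)\leftarrow$ LocalSearch$(\mathbf{x})$; (2) $u\leftarrow u+\delta$; (3) call GlobalSearch$(u)$; if it is feasible with output $(\mathbf{x}',u')$, set $(\mathbf{x},u)\leftarrow(\mathbf{x}',u')$ and repeat; otherwise stop and return $(\mathbf{x},u)$. *)

theory Defs
  imports "HOL-Analysis.Analysis" "HOL-Library.While_Combinator"
begin

definition relu :: "real ^ 'h \<Rightarrow> real ^ 'h" where
  "relu v = (\<chi> i. max (v $ i) 0)"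

text \<open>Input in R^n (index type 'n), hidden width N = CARD('h).
  W0 :: N x n matrix, b0; Ws = [(W_1,b_1),...,(W_{k-1},b_{k-1})] (so k = length Ws + 1 \<ge> 1);
  output row Wk (as a vector in R^N) and scalar bk.\<close>
definition relu_net ::
  "real ^ 'n ^ 'h \<Rightarrow> real ^ 'h \<Rightarrow> ((real ^ 'h ^ 'h) \<times> (real ^ 'h)) list \<Rightarrow> real ^ 'h \<Rightarrow> real
   \<Rightarrow> real ^ 'n \<Rightarrow> real" where
  "relu_net W0 b0 Ws Wk bk x =
     Wk \<bullet> fold (\<lambda>(W, b) z. relu (W *v z + b)) Ws (relu (W0 *v x + b0)) + bk"

text \<open>State: Inl x = continue from x; Inr (x,u) = stopped,
  returning (x,u).  LocalSearch: x \<mapsto> (x',u');  GlobalSearch: u \<mapsto> Some (x',u') ("feasible")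
  or None ("not feasible").\<close>
definition fub_step ::
  "('x \<Rightarrow> ('x \<times> real)) \<Rightarrow> (real \<Rightarrow> (('x \<times> real)) option) \<Rightarrow> real \<Rightarrow> 'x \<Rightarrow> 'x + (('x \<times> real))" where
  "fub_step LS GS \<delta> x =
     (let (x1, u1) = LS x; u2 = u1 + \<delta> in
      case GS u2 of Some (x', u') \<Rightarrow> Inl x' | None \<Rightarrow> Inr (x1, u2))"

text \<open>FindUpperBound: None means non-termination, Some (x,u) means it stops returning (x,u).\<close>
definition find_upper_bound ::
  "('x \<Rightarrow> ('x \<times> real)) \<Rightarrow> (real \<Rightarrow> (('x \<times> real)) option) \<Rightarrow> real \<Rightarrow> 'x \<Rightarrow> (('x \<times> real)) option" where
  "find_upper_bound LS GS \<delta> x0 =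
     map_option projr (while_option isl (\<lambda>s. fub_step LS GS \<delta> (projl s)) (Inl x0))"

end

theory Submission
  imports Defs
begin

lemma relu_cont: "continuous_on S g \<Longrightarrow> continuous_on S (\<lambda>x. relu (g x))"
  unfolding relu_def by (intro continuous_intros)

lemma mv_cont: "continuous_on S g \<Longrightarrow> continuous_on S (\<lambda>x. (W::real^'a^'b) *v g x)"
  by (rule bounded_linear.continuous_on[OF matrix_vector_mul_bounded_linear])

lemma fold_cont:
  fixes Ws :: "((real ^ 'h ^ 'h) \<times> (real ^ 'h)) list"
  shows "continuous_on S g \<Longrightarrow>
    continuous_on S (\<lambda>x. fold (\<lambda>(W, b) z. relu (W *v z + b)) Ws (g x))"
proof (induction Ws arbitrary: g)
  case Nil then show ?case by simp
next
  case (Cons a Ws)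
  obtain W b where a: "a = (W, b)" by force
  have "continuous_on S (\<lambda>x. relu (W *v g x + b))"
    by (intro relu_cont continuous_intros mv_cont Cons.prems)
  from Cons.IH[OF this] show ?case by (simp add: a)
qed

lemma net_cont: "continuous_on S (relu_net W0 b0 Ws Wk bk)"
proof -
  have "continuous_on S (\<lambda>x. relu (W0 *v x + b0))"
    by (intro relu_cont continuous_intros mv_cont)
  from fold_cont[OF this, of Ws] show ?thesis
    unfolding relu_net_def[abs_def] by (intro continuous_intros)
qed

theorem mainTheorem1:
  fixes W0 :: "real ^ 'n ^ 'h" and b0 :: "real ^ 'h"
    and Ws :: "((real ^ 'h ^ 'h) \<times> (real ^ 'h)) list" and Wk :: "real ^ 'h" and bk :: real
    and A :: "real ^ 'n ^ 'm" and c :: "real ^ 'm"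
    and LS :: "real ^ 'n \<Rightarrow> (real ^ 'n) \<times> real"
    and GS :: "real \<Rightarrow> ((real ^ 'n) \<times> real) option"
    and \<delta> :: real and x0 :: "real ^ 'n"
  defines "F \<equiv> relu_net W0 b0 Ws Wk bk"
      and "P \<equiv> {x. A *v x \<le> c}"
  assumes P_ne: "P \<noteq> {}" and P_compact: "compact P"
    and delta_pos: "\<delta> > 0"
    and P1: "\<forall>x\<in>P. fst (LS x) \<in> P \<and> snd (LS x) = F (fst (LS x)) \<and> F (fst (LS x)) \<ge> F x"
    and P2: "\<forall>u. (case GS u of
                     Some (x', u') \<Rightarrow> x' \<in> P \<and> u' = F x' \<and> u' \<ge> u
                   | None \<Rightarrow> \<not> (\<exists>x'\<in>P. F x' \<ge> u))"
    and x0: "x0 \<in> P"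
  shows "\<exists>x u. find_upper_bound LS GS \<delta> x0 = Some (x, u) \<and>
           Sup (F ` P) \<le> u \<and> u \<le> Sup (F ` P) + \<delta>"
proof -
  define S where "S = Sup (F ` P)"
  have cont: "continuous_on P F" unfolding F_def by (rule net_cont)
  have "compact (F ` P)" by (rule compact_continuous_image[OF cont P_compact])
  hence bdd: "bdd_above (F ` P)" by (simp add: compact_imp_bounded bounded_imp_bdd_above)
  have leS: "\<And>x. x \<in> P \<Longrightarrow> F x \<le> S" unfolding S_def using bdd by (simp add: cSUP_upper)
  define Inv :: "(real^'n) + ((real^'n) \<times> real) \<Rightarrow> bool" where "Inv s = (case s of Inl x \<Rightarrow> x \<in> P | Inr (x, u) \<Rightarrow> S \<le> u \<and> u \<le> S + \<delta>)" for s
  define f :: "(real^'n) + ((real^'n) \<times> real) \<Rightarrow> nat" where "f s = (case s of Inl x \<Rightarrow> nat \<lceil>(S - F x) / \<delta>\<rceil> + 1 | Inr _ \<Rightarrow> (0::nat))" for s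
  define stp :: "(real^'n) + ((real^'n) \<times> real) \<Rightarrow> (real^'n) + ((real^'n) \<times> real)" where "stp = (\<lambda>s. fub_step LS GS \<delta> (projl s))"
  have step: "Inv (stp s) \<and> f (stp s) < f s" if "Inv s" "isl s" for s
  proof -
    obtain x where s: "s = Inl x" using \<open>isl s\<close> by (cases s) auto
    have xP: "x \<in> P" using that s by (simp add: Inv_def)
    obtain x1 u1 where L: "LS x = (x1, u1)" by force
    have x1P: "x1 \<in> P" and u1: "u1 = F x1" and Fx1: "F x1 \<ge> F x"
      using P1 xP L by auto
    show ?thesis
    proof (cases "GS (u1 + \<delta>)")
      case None
      have st: "stp (Inl x) = Inr (x1, u1 + \<delta>)"
        by (simp add: stp_def fub_step_def s L None)
      have all: "\<forall>x'\<in>P. F x' < u1 + \<delta>" using P2[rule_format, of "u1 + \<delta>"] None by auto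
      have "S \<le> u1 + \<delta>" unfolding S_def using P_ne all
        by (intro cSUP_least) (auto intro: less_imp_le)
      moreover have "u1 \<le> S" using leS x1P u1 by simp
      ultimately show ?thesis by (simp add: st Inv_def f_def s)
    next
      case (Some p)
      obtain x' u' where p: "p = (x', u')" by force
      have x'P: "x' \<in> P" and u': "u' = F x'" "u' \<ge> u1 + \<delta>"
        using P2[rule_format, of "u1 + \<delta>"] Some p by auto
      have st: "stp (Inl x) = Inl x'"
        by (simp add: stp_def fub_step_def s L Some p)
      have a: "F x' \<ge> F x + \<delta>" using u' u1 Fx1 by simp
      have b: "F x' \<le> S" using leS x'P .
      have "(S - F x') / \<delta> \<le> (S - F x) / \<delta> - 1"
      proof -
        have "(S - F x') / \<delta> \<le> (S - F x - \<delta>) / \<delta>"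
          using a delta_pos by (intro divide_right_mono) auto
        also have "\<dots> = (S - F x) / \<delta> - 1" using delta_pos by (simp add: diff_divide_distrib)
        finally show ?thesis .
      qed
      hence c: "\<lceil>(S - F x') / \<delta>\<rceil> \<le> \<lceil>(S - F x) / \<delta>\<rceil> - 1"
        by (metis ceiling_diff_one ceiling_mono)
      have "(S - F x) / \<delta> \<ge> 1" using a b delta_pos by (simp add: field_simps)
      hence d: "\<lceil>(S - F x) / \<delta>\<rceil> \<ge> 1" by linarith
      have "nat \<lceil>(S - F x') / \<delta>\<rceil> < nat \<lceil>(S - F x) / \<delta>\<rceil>" using c d by linarith
      thus ?thesis by (simp add: st Inv_def f_def s x'P)
    qed
  qed
  have I0: "Inv (Inl x0)" by (simp add: Inv_def x0)
  obtain t where t: "while_option isl stp (Inl x0) = Some t"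
    using measure_while_option_Some[of Inv isl stp f, OF step I0] by blast
  have It: "Inv t" using while_option_rule[of Inv isl stp, OF _ t I0] step by blast
  have "\<not> isl t" using while_option_stop[OF t] .
  then obtain x u where tr: "t = Inr (x, u)" by (cases t) auto
  have "find_upper_bound LS GS \<delta> x0 = Some (x, u)"
    unfolding find_upper_bound_def using t tr stp_def by simp
  with It tr show ?thesis by (auto simp: Inv_def S_def)
qed

end
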